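(* Let $G=(\mathbb Z/a_1\mathbb Z)\times\dots\times(\mathbb Z/a_r\mathbb Z)$ be a finite Abelian group with $N=\exp(G)$ odd, and let $f:G\to\mathbb Q$ be rational-valued. Then for every $x\in\operatorname{supp}(\widehat f)$, all denominators below are nonzero and $$\widehat f(x)^{2^{\phi(N)}-1}=\prod_{k=0}^{\phi(N)-1}\left(\frac{\widehat M_3(f;2^kx,2^kx)}{\widehat M_2(f;2^{k+1}x)}\right)^{2^{\phi(N)-1-k}},$$ where $\phi$ is Euler's phi function.
   Context: Elements of $G$ are tuples with componentwise addition modulo $a_k$; $\exp(G)=\min\{n>0: nx=0\ \forall x\in G\}$. Define $\chi(x,y)=\exp\left(2\pi i\sum_{k=1}^r \frac{x[k]y[k]}{a_k}\right)$, $\widehat f(x)=\sum_{y\in G}f(y)\overline{\chi(x,y)}$, and $\operatorname{supp}(\widehat f)=\{x\in G:\widehat f(x)\neq 0\}$. The transformed autocorrelations are $\widehat M_n(f;x_1,\dots,x_{n-1})=\widehat f(x_1)\cdots\widehat f(x_{n-1})\widehat f(-(x_1+\dots+x_{n-1}))$; in particular $\widehat M_3(f;y,y)=\widehat f(y)^2\widehat f(-2y)$ and $\widehat M_2(f;y)=\widehat f(y)\widehat f(-y)$. *)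

theory Defs
  imports "HOL-Analysis.Analysis" "HOL-Number_Theory.Number_Theory"
begin

text \<open>The group G = Z/a_0 x ... x Z/a_(r-1) (0-based indices), elements represented
  as functions nat => int with canonical residues in the first r coordinates and 0 beyond.\<close>

definition grp :: "nat \<Rightarrow> (nat \<Rightarrow> nat) \<Rightarrow> (nat \<Rightarrow> int) set" where
  "grp r a = {x. (\<forall>k<r. 0 \<le> x k \<and> x k < int (a k)) \<and> (\<forall>k\<ge>r. x k = 0)}"

definition gadd :: "nat \<Rightarrow> (nat \<Rightarrow> nat) \<Rightarrow> (nat \<Rightarrow> int) \<Rightarrow> (nat \<Rightarrow> int) \<Rightarrow> (nat \<Rightarrow> int)" where
  "gadd r a x y = (\<lambda>k. if k < r then (x k + y k) mod int (a k) else 0)"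

definition gneg :: "nat \<Rightarrow> (nat \<Rightarrow> nat) \<Rightarrow> (nat \<Rightarrow> int) \<Rightarrow> (nat \<Rightarrow> int)" where
  "gneg r a x = (\<lambda>k. if k < r then (- x k) mod int (a k) else 0)"

definition gsmul :: "nat \<Rightarrow> (nat \<Rightarrow> nat) \<Rightarrow> nat \<Rightarrow> (nat \<Rightarrow> int) \<Rightarrow> (nat \<Rightarrow> int)" where
  "gsmul r a n x = (\<lambda>k. if k < r then (int n * x k) mod int (a k) else 0)"

definition gzero :: "nat \<Rightarrow> int" where
  "gzero = (\<lambda>k. 0)"

definition gexp :: "nat \<Rightarrow> (nat \<Rightarrow> nat) \<Rightarrow> nat" where
  "gexp r a = (LEAST n. n > 0 \<and> (\<forall>x\<in>grp r a. gsmul r a n x = gzero))"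

definition chi :: "nat \<Rightarrow> (nat \<Rightarrow> nat) \<Rightarrow> (nat \<Rightarrow> int) \<Rightarrow> (nat \<Rightarrow> int) \<Rightarrow> complex" where
  "chi r a x y = exp (2 * of_real pi * \<i> *
      (\<Sum>k<r. of_int (x k * y k) / of_nat (a k)))"

definition fhat :: "nat \<Rightarrow> (nat \<Rightarrow> nat) \<Rightarrow> ((nat \<Rightarrow> int) \<Rightarrow> rat) \<Rightarrow> (nat \<Rightarrow> int) \<Rightarrow> complex" where
  "fhat r a f x = (\<Sum>y\<in>grp r a. of_real (of_rat (f y)) * cnj (chi r a x y))"

definition supp_fhat :: "nat \<Rightarrow> (nat \<Rightarrow> nat) \<Rightarrow> ((nat \<Rightarrow> int) \<Rightarrow> rat) \<Rightarrow> (nat \<Rightarrow> int) set" where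
  "supp_fhat r a f = {x \<in> grp r a. fhat r a f x \<noteq> 0}"

definition M3hat :: "nat \<Rightarrow> (nat \<Rightarrow> nat) \<Rightarrow> ((nat \<Rightarrow> int) \<Rightarrow> rat) \<Rightarrow> (nat \<Rightarrow> int) \<Rightarrow> (nat \<Rightarrow> int) \<Rightarrow> complex" where
  "M3hat r a f x1 x2 = fhat r a f x1 * fhat r a f x2 * fhat r a f (gneg r a (gadd r a x1 x2))"

definition M2hat :: "nat \<Rightarrow> (nat \<Rightarrow> nat) \<Rightarrow> ((nat \<Rightarrow> int) \<Rightarrow> rat) \<Rightarrow> (nat \<Rightarrow> int) \<Rightarrow> complex" where
  "M2hat r a f x1 = fhat r a f x1 * fhat r a f (gneg r a x1)"

end

theory Submission
  imports Defs "Berlekamp_Zassenhaus.Factor_Bound"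
begin


type_synonym f2 = "bool mod_ring"

lemma f2_two: "(2::f2) = 0"
proof -
  have "(of_nat (CARD(bool)) :: f2) = 0" by (rule of_nat_card_eq_0)
  then show ?thesis by simp
qed


lemma bit_cases2: "(b::f2) = 0 \<or> b = 1"
proof -
  obtain i where "i < CARD(bool)" "b = of_nat i" using surj_of_nat_mod_ring[of b] by blast
  then show ?thesis by (cases i) auto
qed

lemma f2_odd: assumes "odd N" shows "(of_nat N :: f2) = 1"
proof -
  have "N = 2 * (N div 2) + 1" using assms by simp
  then have "(of_nat N :: f2) = of_nat (2 * (N div 2) + 1)" by (rule arg_cong)
  also have "\<dots> = 2 * of_nat (N div 2) + 1" by (simp only: of_nat_add of_nat_mult of_nat_numeral of_nat_1)
  also have "\<dots> = 1" by (simp only: f2_two mult_zero_left add_0)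
  finally show ?thesis .
qed

lemma bit_add_self: "(b::f2) + b = 0"
proof -
  have "b + b = 2 * b" by simp
  then show ?thesis by (simp add: f2_two)
qed

lemma bitpoly_add_self: "(p::f2 poly) + p = 0"
  by (rule poly_eqI) (simp only: coeff_add bit_add_self coeff_0)

lemma bit_mult_self: "(b::f2) * b = b"
  using bit_cases2[of b] by auto

lemma frob: "(q::f2 poly) \<circ>\<^sub>p [:0,0,1:] = q^2"
proof (induct q rule: pCons_induct)
  case 0 then show ?case by simp
next
  case (pCons a q)
  have e: "pCons a q = [:a:] + [:0,1:] * q" by simp
  have x2: "[:0,0,1::f2:] = [:0,1:] * [:0,1:]" by simp
  have "pCons a q \<circ>\<^sub>p [:0,0,1:] = [:a:] + [:0,1:] * [:0,1:] * q^2"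
    using pCons x2 by (simp add: pcompose_pCons)
  moreover have "(pCons a q)^2 = [:a:] + [:0,1:] * [:0,1:] * q^2"
  proof -
    have "(pCons a q)^2 = [:a:]*[:a:] + ([:a:] * ([:0,1:] * q) + [:a:] * ([:0,1:] * q)) + [:0,1:] * [:0,1:] * q^2"
      unfolding e by (simp add: power2_eq_square algebra_simps)
    also have "\<dots> = [:a:] + [:0,1:] * [:0,1:] * q^2"
      by (simp add: bitpoly_add_self bit_mult_self)
    finally show ?thesis .
  qed
  ultimately show ?case by simp
qed

lemma dvd_pderiv_sq: "(u::f2 poly) dvd pderiv (u*u*w)"
  unfolding pderiv_mult by (intro dvd_add dvd_mult dvd_mult2 dvd_refl)
lemma X_ident: "[:0,1:] * [:0,1:]^n - ([:0,1:]^(Suc n) - 1) = (1::f2 poly)"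
  by (simp only: power_Suc diff_diff_eq2 add_diff_cancel_left')
lemma pdX: "pderiv [:0,1::f2:] = 1"
  by (simp only: pderiv_pCons pderiv_1 pCons_0_0 add_0_right) simp
lemma pdXN: assumes "odd (Suc n)" shows "pderiv ([:0,1:]^(Suc n) - 1 :: f2 poly) = [:0,1:]^n"
proof -
  have "of_nat (Suc n) = (1::f2)" using f2_odd[OF assms] .
  then show ?thesis by (simp only: pderiv_diff pderiv_1 diff_zero pderiv_power_Suc pdX smult_1_left mult_1_right)
qed

lemma f2_sqfree:
  fixes hb kb db :: "f2 poly"
  assumes M: "[:0,1:]^N - 1 = hb * kb" and N: "odd N" and dk: "db dvd kb" and dh: "db dvd hb^2"
    and nu: "\<not> is_unit db"
  shows False
proof (cases "algebraic_semidom_class.coprime db hb")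
  case True
  then have "algebraic_semidom_class.coprime db (hb^2)" by (simp add: power2_eq_square)
  then have "is_unit db" by (rule coprime_common_divisor[OF _ dvd_refl dh])
  with nu show False by simp
next
  case False
  define g where "g = gcd db hb"
  have gu: "\<not> is_unit g"
  proof
    assume "is_unit g"
    then have "algebraic_semidom_class.coprime db hb" unfolding g_def is_unit_gcd .
    with False show False by contradiction
  qed
  have "g dvd hb" "g dvd kb" unfolding g_def using dk by (auto intro: dvd_trans)
  then have "g * g dvd hb * kb" by (rule mult_dvd_mono)
  then obtain s where "hb * kb = g * g * s" by (elim dvdE)
  then have s: "[:0,1:]^N - 1 = g * g * s" using M by (simp only:)
  obtain n where n: "N = Suc n" using N by (cases N) auto
  have d1: "g dvd pderiv ([:0,1:]^N - 1 :: f2 poly)" unfolding s by (rule dvd_pderiv_sq)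
  then have d2: "g dvd [:0,1:]^n" using pdXN[of n] N unfolding n by simp
  have d3: "g dvd [:0,1:]^N - 1" unfolding s by simp
  have "g dvd [:0,1:] * [:0,1:]^n - ([:0,1:]^N - 1)"
    by (rule dvd_diff[OF dvd_mult[OF d2] d3])
  then have "g dvd 1" unfolding n by (simp only: X_ident)
  with gu show False by simp
qed

interpretation ratc: map_poly_inj_idom_hom "of_rat :: rat \<Rightarrow> complex" ..

lemma ratc_int: "map_poly (of_rat::rat\<Rightarrow>complex) (of_int_poly p) = of_int_poly p"
  by (simp add: map_poly_map_poly o_def)

lemma common_root_gcd:
  fixes p q :: "int poly" and w :: complex
  assumes "poly (of_int_poly p) w = 0" "poly (of_int_poly q) w = 0" "q \<noteq> 0"
  shows "poly (of_int_poly (gcd p q)) w = 0"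
proof -
  define rp where "rp = (of_int_poly p :: rat poly)"
  define rq where "rq = (of_int_poly q :: rat poly)"
  obtain u v where uv: "u * rp + v * rq = gcd rp rq"
    using bezout_coefficients_fst_snd by blast
  have "map_poly (of_rat::rat\<Rightarrow>complex) (u * rp + v * rq)
     = map_poly of_rat u * of_int_poly p + map_poly of_rat v * of_int_poly q"
    by (simp add: hom_distribs rp_def rq_def ratc_int)
  then have "poly (map_poly (of_rat::rat\<Rightarrow>complex) (gcd rp rq)) w = 0"
    using assms uv by simp
  moreover have "gcd rp rq = Polynomial.smult (inverse (rat_of_int (lead_coeff (gcd p q)))) (of_int_poly (gcd p q))"
    unfolding rp_def rq_def by (rule gcd_rat_to_gcd_int)
  ultimately have "of_rat (inverse (rat_of_int (lead_coeff (gcd p q)))) * poly (of_int_poly (gcd p q)) w = (0::complex)"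
    by (simp add: hom_distribs ratc_int)
  moreover have "lead_coeff (gcd p q) \<noteq> 0" using assms(3) by simp
  ultimately show ?thesis using assms(3) by auto
qed

lemma lc_unit: "lead_coeff (a::int poly) * lead_coeff b = 1 \<Longrightarrow> lead_coeff a = 1 \<or> lead_coeff a = -1"
  using zmult_eq_1_iff by blast

lemma cyc_key_int:
  fixes P :: "int poly" and z :: complex
  assumes N: "odd N" and zN: "z^N = 1" and P2: "poly (of_int_poly P) (z^2) = 0"
  shows "poly (of_int_poly P) z = 0"
proof (rule ccontr)
  assume Pz: "poly (of_int_poly P) z \<noteq> 0"
  define m :: "int poly" where "m = [:0,1:]^N - 1"
  have cm: "of_int_poly m = ([:0,1:]^N - 1 :: complex poly)" unfolding m_def by (simp add: hom_distribs)
  have m0: "m \<noteq> 0"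
  proof
    assume "m = 0"
    then have "poly (of_int_poly m :: complex poly) 0 = 0" by simp
    then show False using N unfolding cm by (cases N) auto
  qed
  define h where "h = gcd P m"
  have mz2: "poly (of_int_poly m :: complex poly) (z^2) = 0"
    unfolding cm using zN by (simp add: power_mult[symmetric] mult.commute[of 2] power_mult)
  have hz2: "poly (of_int_poly h) (z^2) = 0"
    unfolding h_def by (rule common_root_gcd[OF P2 mz2 m0])
  have "h dvd P" unfolding h_def by simp
  then obtain t where "P = h * t" by (elim dvdE)
  then have hz: "poly (of_int_poly h) z \<noteq> 0" using Pz by (simp add: hom_distribs)
  have "h dvd m" unfolding h_def by simp
  then obtain k where mk: "m = h * k" by (elim dvdE)
  have "poly (of_int_poly m :: complex poly) z = 0" unfolding cm using zN by simp
  then have kz: "poly (of_int_poly k) z = 0" using hz unfolding mk by (simp add: hom_distribs)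
  define H where "H = h \<circ>\<^sub>p [:0,0,1:]"
  have Hz: "poly (of_int_poly H) z = 0"
    unfolding H_def using hz2 by (simp add: hom_distribs poly_pcompose power2_eq_square)
  have k0: "k \<noteq> 0" using m0 mk by auto
  define d where "d = gcd H k"
  have dz: "poly (of_int_poly d) z = 0" unfolding d_def by (rule common_root_gcd[OF Hz kz k0])
  have "d dvd k" unfolding d_def by simp
  then obtain k2 where kk: "k = d * k2" by (elim dvdE)
  have "d dvd H" unfolding d_def by simp
  then obtain H2 where HH: "H = d * H2" by (elim dvdE)
  have lcm: "lead_coeff m = 1"
  proof -
    have e: "m = (-1) + [:0,1:]^N" unfolding m_def by (simp add: algebra_simps)
    have "degree (-1::int poly) < degree ([:0,1::int:]^N)" using odd_pos[OF N] by (simp add: degree_power_eq)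
    then have "lead_coeff ((-1) + [:0,1:]^N) = lead_coeff ([:0,1::int:]^N)" by (rule lead_coeff_add_le)
    also have "\<dots> = 1" by (simp add: lead_coeff_power)
    finally show ?thesis using e by simp
  qed
  have "lead_coeff h * lead_coeff k = 1" using lcm mk by (simp add: lead_coeff_mult)
  then have "lead_coeff k = 1 \<or> lead_coeff k = -1" using lc_unit[of k h] by (simp add: mult.commute)
  then have "lead_coeff d * lead_coeff k2 = 1 \<or> lead_coeff d * lead_coeff k2 = -1"
    using kk by (simp add: lead_coeff_mult)
  then have lcd: "lead_coeff d = 1 \<or> lead_coeff d = -1"
    using lc_unit[of d k2] lc_unit[of d "-k2"] by auto
  have degd: "degree d \<noteq> 0"
  proof
    assume "degree d = 0"
    then obtain c where "d = [:c:]" by (rule degree_eq_zeroE)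
    then show False using dz lcd by auto
  qed
  define B :: "int poly \<Rightarrow> f2 poly" where "B = of_int_poly"
  have Bm: "B m = [:0,1:]^N - 1" unfolding B_def m_def by (simp add: hom_distribs)
  have "B m = B h * B k" unfolding B_def mk by (simp add: hom_distribs)
  moreover have "B d dvd B k" unfolding B_def kk by (simp add: hom_distribs)
  moreover have "B d dvd (B h)^2"
  proof -
    have "B H = B h \<circ>\<^sub>p [:0,0,1:]" unfolding B_def H_def by (simp add: hom_distribs)
    also have "\<dots> = (B h)^2" by (rule frob)
    finally show ?thesis unfolding HH B_def by (metis dvd_triv_left of_int_poly_hom.hom_mult)
  qed
  moreover have "\<not> is_unit (B d)"
  proof
    assume "is_unit (B d)"
    then have "degree (B d) = 0" by (simp add: is_unit_poly_iff)
    moreover have "degree (B d) = degree d" unfolding B_def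
      using lcd by (intro degree_map_poly) auto
    ultimately show False using degd by simp
  qed
  ultimately show False using f2_sqfree N Bm by metis
qed


definition omg :: "nat \<Rightarrow> complex" where "omg N = exp (- (2 * of_real pi * \<i>) / of_nat N)"
definition Ee :: "nat \<Rightarrow> (nat \<Rightarrow> nat) \<Rightarrow> nat \<Rightarrow> (nat \<Rightarrow> int) \<Rightarrow> (nat \<Rightarrow> int) \<Rightarrow> int" where
  "Ee r a N x y = (\<Sum>k<r. x k * y k * int (N div a k))"

lemma of_real_of_rat_c: "(of_real (of_rat q) :: complex) = of_rat q"
  by (cases q) (simp add: of_rat_rat)

lemma chi_exp:
  assumes apos: "\<forall>k<r. a k > 0" and adv: "\<forall>k<r. a k dvd N" and N0: "N > 0"
    and cg: "\<forall>k<r. [x' k = int n * x k] (mod int (a k))"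
  shows "chi r a x' y = exp (2 * of_real pi * \<i> * (of_nat n * of_int (Ee r a N x y) / of_nat N))"
proof -
  have "\<forall>k. \<exists>t. k < r \<longrightarrow> x' k = int n * x k + int (a k) * t"
  proof
    fix k
    show "\<exists>t. k < r \<longrightarrow> x' k = int n * x k + int (a k) * t"
    proof (cases "k < r")
      case True
      then have "[int n * x k = x' k] (mod int (a k))" using cg by (simp add: cong_sym)
      then obtain t where "x' k = int n * x k + int (a k) * t" by (auto simp: cong_iff_lin)
      then show ?thesis by blast
    qed auto
  qed
  then obtain t where t: "\<forall>k. k < r \<longrightarrow> x' k = int n * x k + int (a k) * t k" by (metis choice)
  have "(\<Sum>k<r. of_int (x' k * y k) / of_nat (a k) :: complex)
      = (\<Sum>k<r. of_nat n * of_int (x k * y k * int (N div a k)) / of_nat N + of_int (t k * y k))"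
  proof (rule sum.cong)
    fix k assume "k \<in> {..<r}"
    then have k: "k < r" by simp
    have a0: "(of_nat (a k)::complex) \<noteq> 0" using apos k by simp
    have Nd: "(of_nat N :: complex) = of_nat (a k) * of_nat (N div a k)"
      using adv k by (metis dvd_mult_div_cancel of_nat_mult)
    have N0': "(of_nat N :: complex) \<noteq> 0" using N0 by simp
    then have d0: "(of_nat (N div a k) :: complex) \<noteq> 0" using Nd by auto
    show "of_int (x' k * y k) / of_nat (a k) = of_nat n * of_int (x k * y k * int (N div a k)) / of_nat N + (of_int (t k * y k) :: complex)"
      using t k a0 d0 unfolding Nd by (simp add: field_simps)
  qed simp
  also have "\<dots> = of_nat n * of_int (Ee r a N x y) / of_nat N + of_int (\<Sum>k<r. t k * y k)"
    by (simp add: sum.distrib Ee_def sum_divide_distrib sum_distrib_left)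
  finally have S: "(\<Sum>k<r. of_int (x' k * y k) / of_nat (a k) :: complex) = \<dots>" .
  define T where "T = (\<Sum>k<r. t k * y k)"
  have eT: "exp (2 * of_real pi * \<i> * of_int T) = 1"
  proof -
    have "exp (complex_of_real (2 * real_of_int T * pi) * \<i>) = 1" by (rule exp_integer_2pi) simp
    moreover have "complex_of_real (2 * real_of_int T * pi) * \<i> = 2 * of_real pi * \<i> * of_int T" by simp
    ultimately show ?thesis by (simp add: mult_ac)
  qed
  show ?thesis unfolding chi_def S T_def[symmetric] using eT
    by (simp add: distrib_left exp_add)
qed

lemma Ee_nonneg: "x \<in> grp r a \<Longrightarrow> y \<in> grp r a \<Longrightarrow> Ee r a N x y \<ge> 0"
  unfolding Ee_def grp_def by (auto intro!: sum_nonneg)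

lemma fhat_V:
  assumes apos: "\<forall>k<r. a k > 0" and adv: "\<forall>k<r. a k dvd N" and N0: "N > 0"
    and xG: "x \<in> grp r a"
    and cg: "\<forall>k<r. [x' k = int n * x k] (mod int (a k))"
  shows "fhat r a f x' = (\<Sum>y\<in>grp r a. of_rat (f y) * omg N ^ (n * nat (Ee r a N x y)))"
  unfolding fhat_def
proof (rule sum.cong)
  fix y assume yG: "y \<in> grp r a"
  define E where "E = Ee r a N x y"
  have E0: "E \<ge> 0" unfolding E_def by (rule Ee_nonneg[OF xG yG])
  have "cnj (chi r a x' y) = exp (- (2 * of_real pi * \<i>) * (of_nat n * of_int E / of_nat N))"
    unfolding chi_exp[OF apos adv N0 cg] exp_cnj E_def by simp
  also have "\<dots> = exp (of_nat (n * nat E) * (- (2 * of_real pi * \<i>) / of_nat N))"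
    using E0 by (simp add: field_simps)
  also have "\<dots> = omg N ^ (n * nat E)" unfolding omg_def by (rule exp_of_nat_mult)
  finally show "complex_of_real (real_of_rat (f y)) * cnj (chi r a x' y) = of_rat (f y) * omg N ^ (n * nat (Ee r a N x y))"
    by (simp add: of_real_of_rat_c E_def)
qed simp



lemma gexp_props:
  assumes apos: "\<forall>k<r. a k > 0"
  shows "gexp r a > 0" "\<forall>x\<in>grp r a. gsmul r a (gexp r a) x = gzero" "\<forall>k<r. a k dvd gexp r a"
proof -
  define P where "P = (\<lambda>n. n > 0 \<and> (\<forall>x\<in>grp r a. gsmul r a n x = gzero))"
  define n0 where "n0 = (\<Prod>k<r. a k)"
  have "P n0"
  proof -
    have "n0 > 0" unfolding n0_def using apos by (auto intro: prod_pos)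
    moreover have "gsmul r a n0 x = gzero" for x
    proof
      fix k
      show "gsmul r a n0 x k = gzero k"
      proof (cases "k < r")
        case True
        then have "a k dvd n0" unfolding n0_def by (intro dvd_prodI) auto
        then have "int (a k) dvd int n0 * x k" by simp
        then show ?thesis using True by (simp add: gsmul_def gzero_def)
      qed (simp add: gsmul_def gzero_def)
    qed
    ultimately show ?thesis unfolding P_def by blast
  qed
  then have PN: "P (gexp r a)" unfolding gexp_def P_def[symmetric] by (rule LeastI)
  then show "gexp r a > 0" "\<forall>x\<in>grp r a. gsmul r a (gexp r a) x = gzero" unfolding P_def by auto
  show "\<forall>k<r. a k dvd gexp r a"
  proof (intro allI impI)
    fix k assume k: "k < r"
    show "a k dvd gexp r a"
    proof (cases "a k = 1")
      case False
      have "a k > 0" using apos k by simp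
      with False have a1: "a k > 1" by linarith
      define x where "x = (\<lambda>j. if j = k then 1 else (0::int))"
      have "x \<in> grp r a" unfolding grp_def x_def using a1 k apos by auto
      then have "gsmul r a (gexp r a) x k = 0" using PN unfolding P_def gzero_def by auto
      then have "int (gexp r a) mod int (a k) = 0" using k unfolding gsmul_def x_def by simp
      then show ?thesis by (simp add: of_nat_mod[symmetric] del: of_nat_mod) (simp add: mod_0_imp_dvd)
    qed simp
  qed
qed

lemma gsmul_cong: "k < r \<Longrightarrow> [gsmul r a n x k = int n * x k] (mod int (a k))"
  by (simp add: gsmul_def cong_def)

lemma gneg_cong:
  assumes "k < r" "[y k = int n * x k] (mod int (a k))" "a k dvd N" "N > 0"
  shows "[gneg r a y k = int (n * (N - 1)) * x k] (mod int (a k))"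
proof -
  have "[gneg r a y k = - y k] (mod int (a k))" using assms(1) by (simp add: gneg_def cong_def)
  moreover have "[- y k = - (int n * x k)] (mod int (a k))" using assms(2) by (simp add: cong_minus_minus_iff)
  moreover have "[- (int n * x k) = int (n * (N - 1)) * x k] (mod int (a k))"
  proof -
    have e: "- (int n * x k) - int (n * (N - 1)) * x k = - (int N * (int n * x k))"
      using assms(4) by (simp add: of_nat_diff algebra_simps)
    have "int (a k) dvd int N * (int n * x k)" using assms(3) by simp
    then show ?thesis unfolding cong_iff_dvd_diff e by simp
  qed
  ultimately show ?thesis by (meson cong_trans)
qed

lemma gadd_cong:
  assumes "k < r" "[y k = int n * x k] (mod int (a k))" "[z k = int m * x k] (mod int (a k))"
  shows "[gadd r a y z k = int (n + m) * x k] (mod int (a k))"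
proof -
  have "[gadd r a y z k = y k + z k] (mod int (a k))" using assms(1) by (simp add: gadd_def cong_def)
  moreover have "[y k + z k = int n * x k + int m * x k] (mod int (a k))" using assms(2,3) by (rule cong_add)
  ultimately show ?thesis by (simp add: algebra_simps cong_trans)
qed

lemma gsmul_1: "x \<in> grp r a \<Longrightarrow> gsmul r a 1 x = x"
  unfolding gsmul_def grp_def by (rule ext) auto

lemma omg_N: "N > 0 \<Longrightarrow> omg N ^ N = 1"
proof -
  assume N: "N > 0"
  have "omg N ^ N = exp (of_nat N * (- (2 * of_real pi * \<i>) / of_nat N))"
    unfolding omg_def by (rule exp_of_nat_mult[symmetric])
  also have "\<dots> = exp (- (2 * of_real pi * \<i>))" using N by simp
  also have "\<dots> = 1" by (simp add: exp_minus)
  finally show ?thesis .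
qed

lemma omg_cnj: "N > 0 \<Longrightarrow> cnj (omg N) = omg N ^ (N - 1)"
proof -
  assume N: "N > 0"
  have "omg N ^ (N - 1) * omg N = 1" using omg_N[OF N] N by (metis power_minus_mult)
  moreover have "cnj (omg N) * omg N = 1" unfolding omg_def exp_cnj by (simp add: exp_add[symmetric])
  moreover have "omg N \<noteq> 0" unfolding omg_def by simp
  ultimately show ?thesis by (metis mult_right_cancel)
qed

lemma omg_mod: "N > 0 \<Longrightarrow> omg N ^ k = omg N ^ (k mod N)"
proof -
  assume N: "N > 0"
  have "omg N ^ k = omg N ^ (N * (k div N) + k mod N)" by simp
  also have "\<dots> = omg N ^ (k mod N)" by (simp only: power_add power_mult omg_N[OF N]) simp
  finally show ?thesis .
qed



lemma cyc_key_rat: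
  fixes P :: "rat poly" and z :: complex
  assumes N: "odd N" and zN: "z^N = 1" and P2: "poly (map_poly of_rat P) (z^2) = 0"
  shows "poly (map_poly of_rat P) z = 0"
proof -
  obtain c q where cq: "rat_to_normalized_int_poly P = (c,q)" by force
  have P: "P = Polynomial.smult c (of_int_poly q)" and c0: "c > 0"
    using rat_to_normalized_int_poly(1,2)[OF cq] by auto
  have M: "map_poly (of_rat :: rat \<Rightarrow> complex) P = Polynomial.smult (of_rat c) (of_int_poly q)"
    unfolding P by (simp add: hom_distribs ratc_int)
  have "poly (of_int_poly q) (z^2) = (0::complex)" using P2 c0 unfolding M by simp
  then have "poly (of_int_poly q) z = (0::complex)" by (rule cyc_key_int[OF N zN])
  then show ?thesis unfolding M by simp
qed

lemma V_poly:
  fixes g :: "'b \<Rightarrow> rat" and e :: "'b \<Rightarrow> nat"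
  shows "\<exists>Pq::rat poly. \<forall>w. poly (map_poly (of_rat :: rat \<Rightarrow> complex) Pq) w = (\<Sum>y\<in>A. of_rat (g y) * w ^ e y)"
proof (intro exI allI)
  fix w :: complex
  show "poly (map_poly of_rat (\<Sum>y\<in>A. Polynomial.monom (g y) (e y))) w = (\<Sum>y\<in>A. of_rat (g y) * w ^ e y)"
    by (simp add: ratc.hom_sum poly_sum map_poly_monom poly_monom)
qed

lemma tele:
  fixes F :: "nat \<Rightarrow> complex"
  assumes nz: "\<And>j. F j \<noteq> 0"
  shows "(\<Prod>k<n. (F k ^ 2 / F (k + 1)) ^ (2 ^ (n - 1 - k))) = F 0 ^ (2 ^ n) / F n"
proof (induction n)
  case 0
  then show ?case using nz[of 0] by simp
next
  case (Suc n)
  have "(\<Prod>k<Suc n. (F k ^ 2 / F (k + 1)) ^ (2 ^ (Suc n - 1 - k)))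
      = (\<Prod>k<n. (F k ^ 2 / F (k + 1)) ^ (2 ^ (Suc n - 1 - k))) * (F n ^ 2 / F (n + 1))"
    by simp
  also have "(\<Prod>k<n. (F k ^ 2 / F (k + 1)) ^ (2 ^ (Suc n - 1 - k)))
      = (\<Prod>k<n. (F k ^ 2 / F (k + 1)) ^ (2 ^ (n - 1 - k))) ^ 2"
  proof -
    have "(\<Prod>k<n. (F k ^ 2 / F (k + 1)) ^ (2 ^ (Suc n - 1 - k)))
        = (\<Prod>k<n. ((F k ^ 2 / F (k + 1)) ^ (2 ^ (n - 1 - k))) ^ 2)"
    proof (rule prod.cong)
      fix k assume "k \<in> {..<n}"
      then have "Suc n - 1 - k = Suc (n - 1 - k)" by auto
      then show "(F k ^ 2 / F (k + 1)) ^ (2 ^ (Suc n - 1 - k)) = ((F k ^ 2 / F (k + 1)) ^ (2 ^ (n - 1 - k))) ^ 2"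
        by (simp add: power_mult[symmetric] mult.commute)
    qed simp
    then show ?thesis by (simp add: prod_power_distrib)
  qed
  also have "\<dots> = (F 0 ^ (2 ^ n) / F n) ^ 2" using Suc by simp
  also have "(F 0 ^ (2 ^ n) / F n) ^ 2 * (F n ^ 2 / F (n + 1)) = F 0 ^ (2 ^ Suc n) / F (Suc n)"
  proof -
    have "(F 0 ^ (2 ^ n))^2 = F 0 ^ (2^Suc n)" by (simp add: power_mult[symmetric] mult.commute)
    moreover have "(F 0 ^ (2 ^ n) / F n) ^ 2 * (F n ^ 2 / F (n + 1)) = (F 0 ^ (2 ^ n))^2 / F (Suc n)"
      using nz[of n] by (simp add: power_divide)
    ultimately show ?thesis by simp
  qed
  finally show ?case .
qed



lemma cnj_of_rat: "cnj (of_rat q :: complex) = of_rat q"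
  by (metis of_real_of_rat_c complex_cnj_complex_of_real)

theorem theorem3:
  fixes r :: nat and a :: "nat \<Rightarrow> nat" and f :: "(nat \<Rightarrow> int) \<Rightarrow> rat" and x :: "nat \<Rightarrow> int"
  assumes "\<forall>k<r. a k > 0"
    and "odd (gexp r a)"
    and "x \<in> supp_fhat r a f"
  shows "(\<forall>k<totient (gexp r a). M2hat r a f (gsmul r a (2 ^ (k + 1)) x) \<noteq> 0)
    \<and> fhat r a f x ^ (2 ^ totient (gexp r a) - 1) =
      (\<Prod>k<totient (gexp r a).
         (M3hat r a f (gsmul r a (2 ^ k) x) (gsmul r a (2 ^ k) x)
            / M2hat r a f (gsmul r a (2 ^ (k + 1)) x)) ^ (2 ^ (totient (gexp r a) - 1 - k)))"
proof -
  note apos = assms(1)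
  define N where "N = gexp r a"
  have N0: "N > 0" and adv: "\<forall>k<r. a k dvd N" unfolding N_def using gexp_props[OF apos] by auto
  have Nodd: "odd N" unfolding N_def using assms(2) .
  have xG: "x \<in> grp r a" and fx: "fhat r a f x \<noteq> 0" using assms(3) unfolding supp_fhat_def by auto
  define V where "V n = (\<Sum>y\<in>grp r a. of_rat (f y) * omg N ^ (n * nat (Ee r a N x y)))" for n
  have Vfh: "fhat r a f x' = V n" if "\<forall>k<r. [x' k = int n * x k] (mod int (a k))" for x' n
    unfolding V_def by (rule fhat_V[OF apos adv N0 xG that])
  have V1: "V 1 = fhat r a f x" using Vfh[of x 1] by simp
  have Vcnj: "cnj (V n) = V (n * (N - 1))" for n
  proof -
    have "cnj (V n) = (\<Sum>y\<in>grp r a. of_rat (f y) * (cnj (omg N)) ^ (n * nat (Ee r a N x y)))"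
      unfolding V_def by (simp add: cnj_of_rat)
    also have "\<dots> = V (n * (N - 1))" unfolding V_def omg_cnj[OF N0]
      by (simp add: power_mult[symmetric] mult_ac)
    finally show ?thesis .
  qed
  have Vmod: "V n = V n'" if "[n = n'] (mod N)" for n n'
  proof -
    have "omg N ^ (n * e) = omg N ^ (n' * e)" for e
    proof -
      have "[n * e = n' * e] (mod N)" using that by (rule cong_scalar_right)
      then have "(n * e) mod N = (n' * e) mod N" by (simp add: cong_def)
      then show ?thesis by (metis omg_mod[OF N0])
    qed
    then show ?thesis unfolding V_def by simp
  qed
  obtain Pq :: "rat poly" where Pq: "\<And>w. poly (map_poly (of_rat :: rat \<Rightarrow> complex) Pq) w = (\<Sum>y\<in>grp r a. of_rat (f y) * w ^ nat (Ee r a N x y))"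
    using V_poly[of f "\<lambda>y. nat (Ee r a N x y)" "grp r a"] by blast
  have VP: "V n = poly (map_poly of_rat Pq) (omg N ^ n)" for n
    unfolding Pq V_def by (simp add: power_mult)
  have Vnz: "V (2 ^ j) \<noteq> 0" for j
  proof (induction j)
    case 0 then show ?case using V1 fx by simp
  next
    case (Suc j)
    show ?case
    proof
      assume "V (2 ^ Suc j) = 0"
      then have "poly (map_poly of_rat Pq) ((omg N ^ (2 ^ j))^2) = 0"
        unfolding VP by (simp add: power_mult[symmetric] mult.commute)
      moreover have "(omg N ^ (2 ^ j)) ^ N = 1"
        by (simp add: power_mult[symmetric] mult.commute[of "2^j"] power_mult omg_N[OF N0])
      ultimately have "poly (map_poly of_rat Pq) (omg N ^ (2 ^ j)) = 0"
        using cyc_key_rat[OF Nodd] by blast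
      then show False using Suc unfolding VP by simp
    qed
  qed
  define F where "F j = V (2 ^ j)" for j
  have Fnz: "F j \<noteq> 0" for j unfolding F_def by (rule Vnz)
  have fs: "fhat r a f (gsmul r a (2 ^ k) x) = F k" for k
    unfolding F_def by (rule Vfh) (intro allI impI gsmul_cong)
  have fns: "fhat r a f (gneg r a (gsmul r a (2 ^ k) x)) = cnj (F k)" for k
  proof -
    have "fhat r a f (gneg r a (gsmul r a (2 ^ k) x)) = V (2 ^ k * (N - 1))"
      by (rule Vfh) (intro allI impI gneg_cong gsmul_cong; use adv N0 in auto)
    then show ?thesis unfolding F_def Vcnj by simp
  qed
  have fna: "fhat r a f (gneg r a (gadd r a (gsmul r a (2 ^ k) x) (gsmul r a (2 ^ k) x))) = cnj (F (k + 1))" for k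
  proof -
    have "fhat r a f (gneg r a (gadd r a (gsmul r a (2 ^ k) x) (gsmul r a (2 ^ k) x))) = V ((2 ^ k + 2 ^ k) * (N - 1))"
      by (rule Vfh) (intro allI impI gneg_cong gadd_cong gsmul_cong; use adv N0 in auto)
    moreover have "(2::nat) ^ k + 2 ^ k = 2 ^ (k + 1)" by simp
    ultimately show ?thesis unfolding F_def Vcnj by simp
  qed
  have M2: "M2hat r a f (gsmul r a (2 ^ (k + 1)) x) = F (k + 1) * cnj (F (k + 1))" for k
    unfolding M2hat_def fs fns ..
  have M3: "M3hat r a f (gsmul r a (2 ^ k) x) (gsmul r a (2 ^ k) x) = F k * F k * cnj (F (k + 1))" for k
    unfolding M3hat_def fs fna ..
  have ratio: "M3hat r a f (gsmul r a (2 ^ k) x) (gsmul r a (2 ^ k) x) / M2hat r a f (gsmul r a (2 ^ (k + 1)) x)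
      = F k ^ 2 / F (k + 1)" for k
    unfolding M2 M3 using Fnz[of "k+1"] by (simp add: power2_eq_square)
  define t where "t = totient N"
  have "[2 ^ t = 1] (mod N)" unfolding t_def
    by (rule euler_theorem) (use Nodd in \<open>simp add: coprime_commute\<close>)
  then have Ft: "F t = F 0" unfolding F_def using Vmod by simp
  have prod: "(\<Prod>k<t. (F k ^ 2 / F (k + 1)) ^ (2 ^ (t - 1 - k))) = F 0 ^ (2 ^ t - 1)"
  proof -
    have "(\<Prod>k<t. (F k ^ 2 / F (k + 1)) ^ (2 ^ (t - 1 - k))) = F 0 ^ (2 ^ t) / F t"
      by (rule tele[OF Fnz])
    also have "\<dots> = F 0 ^ (2 ^ t) / F 0 ^ 1" using Ft by simp
    also have "\<dots> = F 0 ^ (2 ^ t - 1)"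
      by (rule power_diff[symmetric]) (use Fnz[of 0] in auto)
    finally show ?thesis .
  qed
  have F0: "F 0 = fhat r a f x" unfolding F_def using V1 by simp
  show ?thesis
    unfolding N_def[symmetric] t_def[symmetric]
  proof (intro conjI)
    show "\<forall>k<t. M2hat r a f (gsmul r a (2 ^ (k + 1)) x) \<noteq> 0"
      unfolding M2 using Fnz by simp
    show "fhat r a f x ^ (2 ^ t - 1) = (\<Prod>k<t. (M3hat r a f (gsmul r a (2 ^ k) x) (gsmul r a (2 ^ k) x)
            / M2hat r a f (gsmul r a (2 ^ (k + 1)) x)) ^ (2 ^ (t - 1 - k)))"
      unfolding ratio prod F0 ..
  qed
qed

end
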